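(* Let $n\ge 2$, $d\ge 1$, $\tau=1$, and let $\mu^\star_1,\mu^\star_2\stackrel{\mathrm{i.i.d.}}{\sim}\mathcal N(0,I_d)$ and $\xi_1,\dots,\xi_n\stackrel{\mathrm{i.i.d.}}{\sim}\mathcal N(0,\sigma^2 I_d)$, independent, let $z^\star_1,\dots,z^\star_n\in\{1,2\}$ be fixed labels with both classes nonempty, and $x_i=\mu^\star_{z^\star_i}+\xi_i$. Fix $q>1$, $\beta>1$, and suppose $$\sigma=\beta\,\frac{\sqrt n\,q+n-2}{\sqrt2\,\sqrt{\sqrt n\,q+n}}.$$ Then the probability that there exists a $q$-approximately balanced partition of $[n]$ that is not a fixed point of Lloyd's $k$-means update is at most $2^n\,n\,\rho_q^{d/4}$, where $$\rho_q=\frac{\sigma^2(\sqrt n q+n-2)(\sqrt n q+n)(\sqrt n q+n+2)\bigl(\sqrt n(\sigma^2+2)(\sqrt n+q)-4\bigr)}{\bigl(n\sigma^2(\sqrt n+q)^2+(\sqrt n q+n-2)^2\bigr)^2}.$$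
   Context: A bipartition $\{C_1,C_2\}$ of $[n]=\{1,\dots,n\}$ is $q$-approximately balanced if for $k\in\{1,2\}$, $|C_k|>2$ and $\frac n2-q\sqrt{n/4}<|C_k|<\frac n2+q\sqrt{n/4}$. For a partition $\{C_1,C_2\}$ into nonempty sets with centroids $\widehat\mu_j=|C_j|^{-1}\sum_{k\in C_j}x_k$, Lloyd's update reassigns each $x_i$ to the nearest centroid in Euclidean distance; the partition is a fixed point of Lloyd's update if no sample changes cluster, i.e. there is no $i\in C_j$ (with $\overline j$ the other cluster index) such that $\|x_i-\widehat\mu_{\overline j}\|^2<\|x_i-\widehat\mu_j\|^2$. The probability is over the centers and noise. *)

theory Defs
  imports "HOL-Probability.Probability"
begin

text \<open>Standard Gaussian coordinates: index (0,j),(1,j) give the coordinates of the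
  two centers, index (i+1,j) for i in 1..n gives the (unscaled) noise of sample i.\<close>
definition gauss_space :: "nat \<Rightarrow> (nat \<times> 'd::finite \<Rightarrow> real) measure" where
  "gauss_space n = PiM ({..<n+2} \<times> UNIV) (\<lambda>_. density lborel std_normal_density)"

definition center :: "nat \<Rightarrow> (nat \<times> 'd::finite \<Rightarrow> real) \<Rightarrow> real ^ 'd" where
  "center k \<omega> = (\<chi> j. \<omega> (k - 1, j))"

definition noise :: "real \<Rightarrow> nat \<Rightarrow> (nat \<times> 'd::finite \<Rightarrow> real) \<Rightarrow> real ^ 'd" where
  "noise \<sigma> i \<omega> = (\<chi> j. \<sigma> * \<omega> (i + 1, j))"

definition sample :: "real \<Rightarrow> (nat \<Rightarrow> nat) \<Rightarrow> (nat \<times> 'd::finite \<Rightarrow> real) \<Rightarrow> nat \<Rightarrow> real ^ 'd" where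
  "sample \<sigma> z \<omega> i = center (z i) \<omega> + noise \<sigma> i \<omega>"

definition centroid :: "(nat \<Rightarrow> 'a::real_vector) \<Rightarrow> nat set \<Rightarrow> 'a" where
  "centroid x C = (1 / real (card C)) *\<^sub>R (\<Sum>k\<in>C. x k)"

definition approx_balanced :: "nat \<Rightarrow> real \<Rightarrow> nat set \<Rightarrow> nat set \<Rightarrow> bool" where
  "approx_balanced n q C1 C2 \<longleftrightarrow>
     C1 \<union> C2 = {1..n} \<and> C1 \<inter> C2 = {} \<and>
     (\<forall>C\<in>{C1, C2}. card C > 2 \<and>
        real n / 2 - q * sqrt (real n / 4) < real (card C) \<and>
        real (card C) < real n / 2 + q * sqrt (real n / 4))"

definition lloyd_fixed_point :: "(nat \<Rightarrow> 'a::real_normed_vector) \<Rightarrow> nat set \<Rightarrow> nat set \<Rightarrow> bool" where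
  "lloyd_fixed_point x C1 C2 \<longleftrightarrow>
     \<not> ((\<exists>i\<in>C1. (norm (x i - centroid x C2))\<^sup>2 < (norm (x i - centroid x C1))\<^sup>2) \<or>
        (\<exists>i\<in>C2. (norm (x i - centroid x C1))\<^sup>2 < (norm (x i - centroid x C2))\<^sup>2))"

end

theory Submission
  imports Defs
begin


lemma nn_integral_normal_density_one:
  assumes "s > 0"
  shows "(\<integral>\<^sup>+x. ennreal (normal_density m s x) \<partial>lborel) = 1"
  using assms by (subst nn_integral_eq_integral) (auto simp: integrable_normal_density integral_normal_density)

lemma gauss1:
  fixes \<kappa> c P :: real
  assumes a: "1 - 2*\<kappa>*c\<^sup>2 > 0"
  shows "(\<integral>\<^sup>+y. ennreal (exp (\<kappa> * (P + c*y)\<^sup>2)) \<partial>density lborel (\<lambda>x. ennreal (std_normal_density x)))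
       = ennreal (exp (\<kappa>*P\<^sup>2/(1 - 2*\<kappa>*c\<^sup>2)) / sqrt (1 - 2*\<kappa>*c\<^sup>2))"
proof -
  define a where "a = 1 - 2*\<kappa>*c\<^sup>2"
  define m where "m = 2*\<kappa>*c*P/a"
  define s where "s = 1 / sqrt a"
  define K where "K = exp (\<kappa>*P\<^sup>2/a) / sqrt a"
  have apos: "a > 0" using a a_def by simp
  have K0: "K \<ge> 0" using apos by (simp add: K_def)
  have spos: "s > 0" using apos by (simp add: s_def)
  have pt: "std_normal_density y * exp (\<kappa> * (P + c*y)\<^sup>2) = K * normal_density m s y" for y
  proof -
    have e: "- y\<^sup>2 / 2 + \<kappa> * (P + c*y)\<^sup>2 = \<kappa>*P\<^sup>2/a + (-(y - m)\<^sup>2 / (2 * s\<^sup>2))"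
    proof -
      have s2: "2 * s\<^sup>2 = 2 / a" using apos by (simp add: s_def power_divide)
      have r1: "-(y - m)\<^sup>2 / (2 * s\<^sup>2) = -(a/2) * (y - m)\<^sup>2" using apos by (simp add: s2)
      have am: "a * m = 2*\<kappa>*c*P" using apos by (simp add: m_def)
      have r2: "-(a/2) * (y - m)\<^sup>2 = -(a/2)*y\<^sup>2 + (a*m)*y - (a*m)*m/2"
        by (simp add: power2_eq_square algebra_simps)
      have r3: "(a*m)*m = (2*\<kappa>*c*P)*(2*\<kappa>*c*P)/a" using apos by (simp add: m_def)
      have r4: "\<kappa>*P\<^sup>2/a - (2*\<kappa>*c*P)*(2*\<kappa>*c*P)/a/2 = \<kappa>*P\<^sup>2"
      proof -
        have "\<kappa>*P\<^sup>2/a - (2*\<kappa>*c*P)*(2*\<kappa>*c*P)/a/2 = \<kappa>*P\<^sup>2 * (1 - 2*\<kappa>*c\<^sup>2)/a"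
          using apos by (simp add: power2_eq_square field_simps)
        also have "\<dots> = \<kappa>*P\<^sup>2" using apos by (simp add: a_def[symmetric])
        finally show ?thesis .
      qed
      have r5: "-(a/2)*y\<^sup>2 = -y\<^sup>2/2 + \<kappa>*c\<^sup>2*y\<^sup>2" by (simp add: a_def field_simps)
      have "\<kappa>*P\<^sup>2/a + (-(a/2)*y\<^sup>2 + (2*\<kappa>*c*P)*y - (2*\<kappa>*c*P)*(2*\<kappa>*c*P)/a/2)
          = (\<kappa>*P\<^sup>2/a - (2*\<kappa>*c*P)*(2*\<kappa>*c*P)/a/2) + (-(a/2)*y\<^sup>2 + (2*\<kappa>*c*P)*y)"
        by (simp add: algebra_simps)
      also have "\<dots> = \<kappa>*P\<^sup>2 + (-y\<^sup>2/2 + \<kappa>*c\<^sup>2*y\<^sup>2 + (2*\<kappa>*c*P)*y)" by (simp only: r4 r5)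
      also have "\<dots> = - y\<^sup>2 / 2 + \<kappa> * (P + c*y)\<^sup>2" by (simp add: power2_eq_square algebra_simps)
      finally have F: "\<kappa>*P\<^sup>2/a + (-(a/2)*y\<^sup>2 + (2*\<kappa>*c*P)*y - (2*\<kappa>*c*P)*(2*\<kappa>*c*P)/a/2) = - y\<^sup>2 / 2 + \<kappa> * (P + c*y)\<^sup>2" .
      have E1: "-(y - m)\<^sup>2 / (2 * s\<^sup>2) = -(a/2)*y\<^sup>2 + (a*m)*y - (a*m)*m/2" using r1 r2 by simp
      have E2: "(a*m)*y = (2*\<kappa>*c*P)*y" using am by simp
      have E3: "(a*m)*m/2 = (2*\<kappa>*c*P)*(2*\<kappa>*c*P)/a/2" using r3 by simp
      show ?thesis using F E1 E2 E3 by linarith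
    qed
    have "std_normal_density y * exp (\<kappa> * (P + c*y)\<^sup>2) = (1 / sqrt (2 * pi)) * exp (- y\<^sup>2 / 2 + \<kappa> * (P + c*y)\<^sup>2)"
      by (simp add: std_normal_density_def mult_exp_exp)
    also have "\<dots> = (1 / sqrt (2 * pi)) * exp (\<kappa>*P\<^sup>2/a) * exp (-(y - m)\<^sup>2 / (2 * s\<^sup>2))"
      by (simp only: e exp_add mult.assoc)
    also have "\<dots> = K * normal_density m s y"
      using apos unfolding normal_density_def K_def s_def
      by (simp add: real_sqrt_mult real_sqrt_divide power_divide field_simps)
    finally show ?thesis .
  qed
  have "(\<integral>\<^sup>+y. ennreal (exp (\<kappa> * (P + c*y)\<^sup>2)) \<partial>density lborel (\<lambda>x. ennreal (std_normal_density x)))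
      = (\<integral>\<^sup>+y. ennreal (std_normal_density y) * ennreal (exp (\<kappa> * (P + c*y)\<^sup>2)) \<partial>lborel)"
    by (subst nn_integral_density) auto
  also have "\<dots> = (\<integral>\<^sup>+y. ennreal K * ennreal (normal_density m s y) \<partial>lborel)"
    by (intro nn_integral_cong) (metis K0 ennreal_mult exp_ge_zero normal_density_nonneg pt)
  also have "\<dots> = ennreal K"
    by (simp add: nn_integral_cmult nn_integral_normal_density_one[OF spos])
  finally show ?thesis by (simp add: K_def a_def)
qed



abbreviation "M0 \<equiv> density lborel (\<lambda>x. ennreal (std_normal_density x))"

definition colsum :: "('i \<times> 'd \<Rightarrow> real) \<Rightarrow> ('i \<times> 'd) set \<Rightarrow> ('i \<times> 'd \<Rightarrow> real) \<Rightarrow> 'd \<Rightarrow> real" where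
  "colsum c K \<omega> j = (\<Sum>p\<in>{p\<in>K. snd p = j}. c p * \<omega> p)"

definition colsq :: "('i \<times> 'd \<Rightarrow> real) \<Rightarrow> ('i \<times> 'd) set \<Rightarrow> 'd \<Rightarrow> real" where
  "colsq c K j = (\<Sum>p\<in>{p\<in>K. snd p = j}. (c p)\<^sup>2)"

lemma M0_sets: "sets M0 = sets borel" by simp

lemma comp_meas:
  assumes "p \<in> K"
  shows "(\<lambda>\<omega>. \<omega> p) \<in> borel_measurable (PiM K (\<lambda>_. M0))"
proof -
  have "(\<lambda>\<omega>. \<omega> p) \<in> measurable (PiM K (\<lambda>_. M0)) M0"
    using assms by (rule measurable_component_singleton)
  moreover have "measurable (PiM K (\<lambda>_. M0)) M0 = borel_measurable (PiM K (\<lambda>_. M0))"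
    by (rule measurable_cong_sets[OF refl M0_sets])
  ultimately show ?thesis by simp
qed

lemma colsum_meas:
  assumes "finite K"
  shows "(\<lambda>\<omega>. colsum c K \<omega> j) \<in> borel_measurable (PiM K (\<lambda>_. M0))"
  unfolding colsum_def
proof (rule borel_measurable_sum)
  fix p assume "p \<in> {p \<in> K. snd p = j}"
  then have "(\<lambda>\<omega>. \<omega> p) \<in> borel_measurable (PiM K (\<lambda>_. M0))" by (intro comp_meas) simp
  then show "(\<lambda>\<omega>. c p * \<omega> p) \<in> borel_measurable (PiM K (\<lambda>_. M0))" by measurable
qed

lemma integrand_meas:
  assumes "finite K"
  shows "(\<lambda>\<omega>. ennreal (exp (\<Sum>j\<in>UNIV. \<kappa> j * (P j + colsum c K \<omega> j)\<^sup>2))) \<in> borel_measurable (PiM K (\<lambda>_. M0))"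
proof -
  have [measurable]: "(\<lambda>\<omega>. colsum c K \<omega> j) \<in> borel_measurable (PiM K (\<lambda>_. M0))" for j
    using colsum_meas[OF assms] .
  show ?thesis by measurable
qed

lemma colsum_upd:
  assumes "p0 \<notin> K" "finite K"
  shows "colsum c (insert p0 K) (x(p0 := y)) j = colsum c K x j + (if j = snd p0 then c p0 * y else 0)"
proof -
  have "colsum c K (x(p0 := y)) j = colsum c K x j"
    unfolding colsum_def using assms(1) by (intro sum.cong) auto
  moreover have "{p\<in>insert p0 K. snd p = j} = (if j = snd p0 then insert p0 {p\<in>K. snd p = j} else {p\<in>K. snd p = j})"
    by auto
  ultimately show ?thesis using assms unfolding colsum_def by (auto simp: sum.insert)
qed

lemma colsq_insert:
  assumes "p0 \<notin> K" "finite K"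
  shows "colsq c (insert p0 K) j = colsq c K j + (if j = snd p0 then (c p0)\<^sup>2 else 0)"
proof -
  have "{p\<in>insert p0 K. snd p = j} = (if j = snd p0 then insert p0 {p\<in>K. snd p = j} else {p\<in>K. snd p = j})"
    by auto
  then show ?thesis using assms unfolding colsq_def by (auto simp: sum.insert)
qed

lemma colsq_nonneg: "colsq c K j \<ge> 0" unfolding colsq_def by (auto intro: sum_nonneg)



lemma gaussK:
  fixes K :: "('i \<times> 'd::finite) set" and c :: "'i \<times> 'd \<Rightarrow> real"
  assumes "finite K"
  shows "\<forall>\<kappa> P. (\<forall>j. 1 - 2 * \<kappa> j * colsq c K j > 0) \<longrightarrow>
    (\<integral>\<^sup>+\<omega>. ennreal (exp (\<Sum>j\<in>UNIV. \<kappa> j * (P j + colsum c K \<omega> j)\<^sup>2)) \<partial>PiM K (\<lambda>_. M0))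
    = ennreal ((\<Prod>j\<in>UNIV. 1 / sqrt (1 - 2 * \<kappa> j * colsq c K j))
               * exp (\<Sum>j\<in>UNIV. \<kappa> j * (P j)\<^sup>2 / (1 - 2 * \<kappa> j * colsq c K j)))"
  using assms
proof (induction K rule: finite_induct)
  case empty
  show ?case
    by (simp add: PiM_empty colsum_def colsq_def)
next
  case (insert p0 K)
  interpret product_sigma_finite "\<lambda>_. M0"
    by (simp add: product_sigma_finite_def prob_space_imp_sigma_finite prob_space_normal_density)
  show ?case
  proof (intro allI impI)
    fix \<kappa> P :: "'d \<Rightarrow> real"
    assume pos: "\<forall>j. 1 - 2 * \<kappa> j * colsq c (insert p0 K) j > 0"
    define j0 where "j0 = snd p0"
    define c0 where "c0 = c p0"
    define a0 where "a0 = 1 - 2 * \<kappa> j0 * c0\<^sup>2"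
    have sq: "colsq c (insert p0 K) j = colsq c K j + (if j = j0 then c0\<^sup>2 else 0)" for j
      using colsq_insert[OF insert(2,1)] unfolding j0_def c0_def by simp
    have a0pos: "a0 > 0"
    proof (cases "\<kappa> j0 \<le> 0")
      case True
      then have "\<kappa> j0 * c0\<^sup>2 \<le> 0" by (simp add: mult_nonpos_nonneg)
      then show ?thesis unfolding a0_def by linarith
    next
      case False
      have "1 - 2 * \<kappa> j0 * colsq c (insert p0 K) j0 > 0" using pos by simp
      moreover have "\<kappa> j0 * c0\<^sup>2 \<le> \<kappa> j0 * colsq c (insert p0 K) j0"
        using False colsq_nonneg[of c K j0] by (intro mult_left_mono) (auto simp: sq)
      ultimately show ?thesis unfolding a0_def by linarith
    qed
    define \<kappa>' where "\<kappa>' = \<kappa>(j0 := \<kappa> j0 / a0)"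
    have pos': "\<forall>j. 1 - 2 * \<kappa>' j * colsq c K j > 0"
    proof
      fix j show "1 - 2 * \<kappa>' j * colsq c K j > 0"
      proof (cases "j = j0")
        case True
        have "1 - 2 * \<kappa>' j * colsq c K j = (1 - 2 * \<kappa> j0 * colsq c (insert p0 K) j0) / a0"
          using a0pos True unfolding \<kappa>'_def a0_def by (simp add: sq field_simps)
        then show ?thesis using pos a0pos by simp
      next
        case False then show ?thesis using pos[rule_format, of j] by (simp add: \<kappa>'_def sq)
      qed
    qed
    have meas: "(\<lambda>\<omega>. ennreal (exp (\<Sum>j\<in>UNIV. \<kappa> j * (P j + colsum c (insert p0 K) \<omega> j)\<^sup>2)))
        \<in> borel_measurable (PiM (insert p0 K) (\<lambda>_. M0))"
      using insert(1) by (intro integrand_meas) simp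
    have inner: "(\<integral>\<^sup>+y. ennreal (exp (\<Sum>j\<in>UNIV. \<kappa> j * (P j + colsum c (insert p0 K) (x(p0 := y)) j)\<^sup>2)) \<partial>M0)
       = ennreal (1 / sqrt a0) * ennreal (exp (\<Sum>j\<in>UNIV. \<kappa>' j * (P j + colsum c K x j)\<^sup>2))" for x
    proof -
      define R where "R = (\<Sum>j\<in>UNIV - {j0}. \<kappa> j * (P j + colsum c K x j)\<^sup>2)"
      define Q where "Q = P j0 + colsum c K x j0"
      have e1: "(\<Sum>j\<in>UNIV. \<kappa> j * (P j + colsum c (insert p0 K) (x(p0 := y)) j)\<^sup>2)
          = R + \<kappa> j0 * (Q + c0 * y)\<^sup>2" for y
      proof -
        have "(\<Sum>j\<in>UNIV. \<kappa> j * (P j + colsum c (insert p0 K) (x(p0 := y)) j)\<^sup>2)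
            = \<kappa> j0 * (P j0 + colsum c (insert p0 K) (x(p0 := y)) j0)\<^sup>2
              + (\<Sum>j\<in>UNIV - {j0}. \<kappa> j * (P j + colsum c (insert p0 K) (x(p0 := y)) j)\<^sup>2)"
          by (simp add: sum.remove)
        also have "(\<Sum>j\<in>UNIV - {j0}. \<kappa> j * (P j + colsum c (insert p0 K) (x(p0 := y)) j)\<^sup>2) = R"
          unfolding R_def using insert(1,2)
          by (intro sum.cong) (auto simp: colsum_upd j0_def)
        also have "P j0 + colsum c (insert p0 K) (x(p0 := y)) j0 = Q + c0 * y"
          unfolding Q_def using insert(1,2) by (simp add: colsum_upd j0_def c0_def)
        finally show ?thesis by linarith
      qed
      have e2: "(\<Sum>j\<in>UNIV. \<kappa>' j * (P j + colsum c K x j)\<^sup>2) = R + \<kappa> j0 * Q\<^sup>2 / a0"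
      proof -
        have "(\<Sum>j\<in>UNIV. \<kappa>' j * (P j + colsum c K x j)\<^sup>2)
            = \<kappa>' j0 * (P j0 + colsum c K x j0)\<^sup>2 + (\<Sum>j\<in>UNIV - {j0}. \<kappa>' j * (P j + colsum c K x j)\<^sup>2)"
          by (simp add: sum.remove)
        also have "(\<Sum>j\<in>UNIV - {j0}. \<kappa>' j * (P j + colsum c K x j)\<^sup>2) = R"
          unfolding R_def \<kappa>'_def by (intro sum.cong) auto
        finally show ?thesis unfolding Q_def \<kappa>'_def by simp
      qed
      have "(\<integral>\<^sup>+y. ennreal (exp (\<Sum>j\<in>UNIV. \<kappa> j * (P j + colsum c (insert p0 K) (x(p0 := y)) j)\<^sup>2)) \<partial>M0)
          = (\<integral>\<^sup>+y. ennreal (exp R) * ennreal (exp (\<kappa> j0 * (Q + c0 * y)\<^sup>2)) \<partial>M0)"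
        by (intro nn_integral_cong) (simp add: e1 exp_add ennreal_mult')
      also have "\<dots> = ennreal (exp R) * (\<integral>\<^sup>+y. ennreal (exp (\<kappa> j0 * (Q + c0 * y)\<^sup>2)) \<partial>M0)"
        by (rule nn_integral_cmult) simp
      also have "\<dots> = ennreal (exp R) * ennreal (exp (\<kappa> j0 * Q\<^sup>2 / a0) / sqrt a0)"
        using gauss1[of "\<kappa> j0" c0 Q] a0pos unfolding a0_def by simp
      also have "\<dots> = ennreal (1 / sqrt a0) * ennreal (exp (R + \<kappa> j0 * Q\<^sup>2 / a0))"
      proof -
        have "exp R * (exp (\<kappa> j0 * Q\<^sup>2 / a0) / sqrt a0) = 1 / sqrt a0 * exp (R + \<kappa> j0 * Q\<^sup>2 / a0)"
          by (simp add: exp_add)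
        then show ?thesis using a0pos by (simp add: ennreal_mult'[symmetric])
      qed
      finally show ?thesis by (simp add: e2)
    qed
    have "(\<integral>\<^sup>+\<omega>. ennreal (exp (\<Sum>j\<in>UNIV. \<kappa> j * (P j + colsum c (insert p0 K) \<omega> j)\<^sup>2)) \<partial>PiM (insert p0 K) (\<lambda>_. M0))
        = (\<integral>\<^sup>+x. (\<integral>\<^sup>+y. ennreal (exp (\<Sum>j\<in>UNIV. \<kappa> j * (P j + colsum c (insert p0 K) (x(p0 := y)) j)\<^sup>2)) \<partial>M0) \<partial>PiM K (\<lambda>_. M0))"
      by (rule product_nn_integral_insert[OF insert(1,2) meas])
    also have "\<dots> = (\<integral>\<^sup>+x. ennreal (1 / sqrt a0) * ennreal (exp (\<Sum>j\<in>UNIV. \<kappa>' j * (P j + colsum c K x j)\<^sup>2)) \<partial>PiM K (\<lambda>_. M0))"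
      by (simp add: inner)
    also have "\<dots> = ennreal (1 / sqrt a0) * (\<integral>\<^sup>+x. ennreal (exp (\<Sum>j\<in>UNIV. \<kappa>' j * (P j + colsum c K x j)\<^sup>2)) \<partial>PiM K (\<lambda>_. M0))"
      by (rule nn_integral_cmult) (rule integrand_meas[OF insert(1)])
    also have "\<dots> = ennreal (1 / sqrt a0) * ennreal ((\<Prod>j\<in>UNIV. 1 / sqrt (1 - 2 * \<kappa>' j * colsq c K j))
               * exp (\<Sum>j\<in>UNIV. \<kappa>' j * (P j)\<^sup>2 / (1 - 2 * \<kappa>' j * colsq c K j)))"
      using insert(3) pos' by simp
    also have "\<dots> = ennreal ((\<Prod>j\<in>UNIV. 1 / sqrt (1 - 2 * \<kappa> j * colsq c (insert p0 K) j))
               * exp (\<Sum>j\<in>UNIV. \<kappa> j * (P j)\<^sup>2 / (1 - 2 * \<kappa> j * colsq c (insert p0 K) j)))"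
    proof -
      have d0: "1 - 2 * \<kappa>' j0 * colsq c K j0 = (1 - 2 * \<kappa> j0 * colsq c (insert p0 K) j0) / a0"
        using a0pos unfolding \<kappa>'_def a0_def by (simp add: sq field_simps)
      have P0: "1 - 2 * \<kappa> j0 * colsq c (insert p0 K) j0 > 0" using pos by simp
      have p1: "(\<Prod>j\<in>UNIV. 1 / sqrt (1 - 2 * \<kappa>' j * colsq c K j))
          = (1 / sqrt (1 - 2 * \<kappa>' j0 * colsq c K j0)) * (\<Prod>j\<in>UNIV - {j0}. 1 / sqrt (1 - 2 * \<kappa>' j * colsq c K j))"
        by (simp add: prod.remove)
      have p2: "(\<Prod>j\<in>UNIV. 1 / sqrt (1 - 2 * \<kappa> j * colsq c (insert p0 K) j))
          = (1 / sqrt (1 - 2 * \<kappa> j0 * colsq c (insert p0 K) j0)) * (\<Prod>j\<in>UNIV - {j0}. 1 / sqrt (1 - 2 * \<kappa> j * colsq c (insert p0 K) j))"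
        by (simp add: prod.remove)
      have p3: "(\<Prod>j\<in>UNIV - {j0}. 1 / sqrt (1 - 2 * \<kappa>' j * colsq c K j)) = (\<Prod>j\<in>UNIV - {j0}. 1 / sqrt (1 - 2 * \<kappa> j * colsq c (insert p0 K) j))"
        by (intro prod.cong) (auto simp: \<kappa>'_def sq)
      have s1: "(\<Sum>j\<in>UNIV. \<kappa>' j * (P j)\<^sup>2 / (1 - 2 * \<kappa>' j * colsq c K j))
          = \<kappa>' j0 * (P j0)\<^sup>2 / (1 - 2 * \<kappa>' j0 * colsq c K j0) + (\<Sum>j\<in>UNIV - {j0}. \<kappa>' j * (P j)\<^sup>2 / (1 - 2 * \<kappa>' j * colsq c K j))"
        by (simp add: sum.remove)
      have s2: "(\<Sum>j\<in>UNIV. \<kappa> j * (P j)\<^sup>2 / (1 - 2 * \<kappa> j * colsq c (insert p0 K) j))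
          = \<kappa> j0 * (P j0)\<^sup>2 / (1 - 2 * \<kappa> j0 * colsq c (insert p0 K) j0) + (\<Sum>j\<in>UNIV - {j0}. \<kappa> j * (P j)\<^sup>2 / (1 - 2 * \<kappa> j * colsq c (insert p0 K) j))"
        by (simp add: sum.remove)
      have s3: "(\<Sum>j\<in>UNIV - {j0}. \<kappa>' j * (P j)\<^sup>2 / (1 - 2 * \<kappa>' j * colsq c K j)) = (\<Sum>j\<in>UNIV - {j0}. \<kappa> j * (P j)\<^sup>2 / (1 - 2 * \<kappa> j * colsq c (insert p0 K) j))"
        by (intro sum.cong) (auto simp: \<kappa>'_def sq)
      have s4: "\<kappa>' j0 * (P j0)\<^sup>2 / (1 - 2 * \<kappa>' j0 * colsq c K j0) = \<kappa> j0 * (P j0)\<^sup>2 / (1 - 2 * \<kappa> j0 * colsq c (insert p0 K) j0)"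
        unfolding d0 using a0pos P0 by (simp add: \<kappa>'_def field_simps)
      have s5: "1 / sqrt a0 * (1 / sqrt (1 - 2 * \<kappa>' j0 * colsq c K j0)) = 1 / sqrt (1 - 2 * \<kappa> j0 * colsq c (insert p0 K) j0)"
        unfolding d0 using a0pos P0 by (simp add: real_sqrt_divide)
      have nn: "0 \<le> 1 / sqrt a0" using a0pos by simp
      have s6: "sqrt a0 * sqrt (1 - 2 * \<kappa>' j0 * colsq c K j0) = sqrt (1 - 2 * \<kappa> j0 * colsq c (insert p0 K) j0)"
        using d0 a0pos by (simp add: real_sqrt_divide)
      show ?thesis
        unfolding p1 p2 p3 s1 s2 s3 s4 ennreal_mult'[OF nn, symmetric]
        by (simp add: s6)
    qed
    finally show "(\<integral>\<^sup>+\<omega>. ennreal (exp (\<Sum>j\<in>UNIV. \<kappa> j * (P j + colsum c (insert p0 K) \<omega> j)\<^sup>2)) \<partial>PiM (insert p0 K) (\<lambda>_. M0))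
    = ennreal ((\<Prod>j\<in>UNIV. 1 / sqrt (1 - 2 * \<kappa> j * colsq c (insert p0 K) j))
               * exp (\<Sum>j\<in>UNIV. \<kappa> j * (P j)\<^sup>2 / (1 - 2 * \<kappa> j * colsq c (insert p0 K) j)))" .
  qed
qed



lemma col_reindex:
  "(\<Sum>p\<in>{p\<in>{..<N} \<times> (UNIV::'d set). snd p = j}. f p) = (\<Sum>k<N. f (k, j))"
proof -
  have "{p\<in>{..<N} \<times> (UNIV::'d set). snd p = j} = (\<lambda>k. (k, j)) ` {..<N}" by auto
  moreover have "inj_on (\<lambda>k. (k, j)) {..<N}" by (auto simp: inj_on_def)
  ultimately show ?thesis by (simp add: sum.reindex)
qed

lemma gauss_col:
  fixes \<alpha> :: "nat \<Rightarrow> real" and \<kappa> :: real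
  assumes "1 - 2 * \<kappa> * (\<Sum>k<N. (\<alpha> k)\<^sup>2) > 0"
  shows "(\<integral>\<^sup>+\<omega>. ennreal (exp (\<kappa> * (\<Sum>j\<in>(UNIV::'d::finite set). (\<Sum>k<N. \<alpha> k * \<omega> (k, j))\<^sup>2)))
           \<partial>PiM ({..<N} \<times> UNIV) (\<lambda>_. M0))
       = ennreal ((1 / sqrt (1 - 2 * \<kappa> * (\<Sum>k<N. (\<alpha> k)\<^sup>2))) ^ CARD('d))"
proof -
  define c :: "nat \<times> 'd \<Rightarrow> real" where "c = (\<lambda>p. \<alpha> (fst p))"
  define K :: "(nat \<times> 'd) set" where "K = {..<N} \<times> UNIV"
  have cs: "colsum c K \<omega> j = (\<Sum>k<N. \<alpha> k * \<omega> (k, j))" for \<omega> j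
    unfolding colsum_def K_def c_def by (simp add: col_reindex)
  have cq: "colsq c K j = (\<Sum>k<N. (\<alpha> k)\<^sup>2)" for j
    unfolding colsq_def K_def c_def by (simp add: col_reindex)
  have "finite K" unfolding K_def by simp
  from gaussK[OF this, of c, rule_format, of "\<lambda>_. \<kappa>" "\<lambda>_. 0"] assms
  have "(\<integral>\<^sup>+\<omega>. ennreal (exp (\<Sum>j\<in>UNIV. \<kappa> * (0 + colsum c K \<omega> j)\<^sup>2)) \<partial>PiM K (\<lambda>_. M0))
       = ennreal ((\<Prod>j\<in>UNIV. 1 / sqrt (1 - 2 * \<kappa> * colsq c K j))
               * exp (\<Sum>j\<in>(UNIV::'d set). \<kappa> * 0\<^sup>2 / (1 - 2 * \<kappa> * colsq c K j)))"
    by (simp add: cq)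
  then have "(\<integral>\<^sup>+\<omega>. ennreal (exp (\<kappa> * (\<Sum>j\<in>(UNIV::'d set). (\<Sum>k<N. \<alpha> k * \<omega> (k, j))\<^sup>2))) \<partial>PiM K (\<lambda>_. M0))
       = ennreal ((1 / sqrt (1 - 2 * \<kappa> * (\<Sum>k<N. (\<alpha> k)\<^sup>2))) ^ CARD('d))"
    by (simp only: cs cq sum_distrib_left[symmetric] prod_constant add_0_left power_zero_numeral mult_zero_right div_0 sum.neutral_const exp_zero mult_1_right)
  then show ?thesis unfolding K_def .
qed

lemma lin_meas:
  "(\<lambda>\<omega>. \<Sum>j\<in>(UNIV::'d::finite set). (\<Sum>k<N. \<alpha> k * \<omega> (k, j))\<^sup>2) \<in> borel_measurable (PiM ({..<N} \<times> UNIV) (\<lambda>_. M0))"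
proof -
  have "(\<lambda>\<omega>. \<omega> (k, j)) \<in> borel_measurable (PiM ({..<N} \<times> (UNIV::'d set)) (\<lambda>_. M0))" if "k < N" for k j
    using that by (intro comp_meas) simp
  then have "(\<lambda>\<omega>. \<Sum>k<N. \<alpha> k * \<omega> (k, j)) \<in> borel_measurable (PiM ({..<N} \<times> (UNIV::'d set)) (\<lambda>_. M0))" for j
    by (intro borel_measurable_sum) auto
  then show ?thesis by (intro borel_measurable_sum) auto
qed



lemma amgm_aux:
  fixes lam u v :: real
  assumes "lam > 0" "u > 0" "v > 0" "u * v \<ge> 1"
  shows "1 \<le> lam / 2 * u + 1 / (2 * lam) * v"
proof -
  define w where "w = lam * u"
  have w: "w > 0" using assms by (simp add: w_def)
  have "v / lam \<ge> 1 / w"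
  proof -
    have "v / lam = (u * v) / w" using assms by (simp add: w_def field_simps)
    also have "\<dots> \<ge> 1 / w" using assms w by (intro divide_right_mono) auto
    finally show ?thesis .
  qed
  moreover have "w + 1 / w \<ge> 2"
  proof -
    have "(w - 1)\<^sup>2 \<ge> 0" by simp
    then have "w * w + 1 \<ge> 2 * w" by (simp add: power2_eq_square algebra_simps)
    then show ?thesis using w by (simp add: field_simps)
  qed
  ultimately have "w + v / lam \<ge> 2" by linarith
  then show ?thesis unfolding w_def by (simp add: field_simps)
qed

lemma sqrt_sqrt_power_powr:
  assumes "\<rho> > 0"
  shows "(sqrt (sqrt \<rho>)) ^ D = \<rho> powr (real D / 4)"
proof -
  have "sqrt (sqrt \<rho>) = \<rho> powr (1/4)"
    using assms by (simp add: powr_half_sqrt[symmetric] powr_powr)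
  then have "(sqrt (sqrt \<rho>)) ^ D = (\<rho> powr (1/4)) powr (real D)"
    using assms by (simp add: powr_realpow)
  also have "\<dots> = \<rho> powr (real D / 4)" by (simp add: powr_powr)
  finally show ?thesis .
qed

lemma chernoff_pair:
  fixes \<alpha> \<beta> :: "nat \<Rightarrow> real" and Lb Hb \<rho> :: real and N :: nat
  defines "Pm \<equiv> PiM ({..<N} \<times> (UNIV::'d::finite set)) (\<lambda>_. M0)"
  defines "X \<equiv> \<lambda>\<omega>. \<Sum>j\<in>(UNIV::'d set). (\<Sum>k<N. \<alpha> k * \<omega> (k, j))\<^sup>2"
  defines "Y \<equiv> \<lambda>\<omega>. \<Sum>j\<in>(UNIV::'d set). (\<Sum>k<N. \<beta> k * \<omega> (k, j))\<^sup>2"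
  assumes sX: "Lb \<le> (\<Sum>k<N. (\<alpha> k)\<^sup>2)" and sY: "(\<Sum>k<N. (\<beta> k)\<^sup>2) \<le> Hb"
    and H0: "0 < Hb" and HL: "Hb < Lb" and rho: "\<rho> * (Lb + Hb)\<^sup>2 = 4 * Lb * Hb"
  shows "{\<omega> \<in> space Pm. X \<omega> < Y \<omega>} \<in> sets Pm"
    and "emeasure Pm {\<omega> \<in> space Pm. X \<omega> < Y \<omega>} \<le> ennreal (\<rho> powr (real CARD('d) / 4))"
proof -
  have [measurable]: "X \<in> borel_measurable Pm" "Y \<in> borel_measurable Pm"
    unfolding X_def Y_def Pm_def by (rule lin_meas)+
  show Fm: "{\<omega> \<in> space Pm. X \<omega> < Y \<omega>} \<in> sets Pm" by measurable
  define sx where "sx = (\<Sum>k<N. (\<alpha> k)\<^sup>2)"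
  define sy where "sy = (\<Sum>k<N. (\<beta> k)\<^sup>2)"
  define t where "t = (Lb - Hb) / (8 * Lb * Hb)"
  define D where "D = CARD('d)"
  have L0: "Lb > 0" using H0 HL by simp
  have t0: "t > 0" using H0 HL L0 unfolding t_def by (simp add: divide_pos_pos)
  have sx0: "sx \<ge> 0" unfolding sx_def by (simp add: sum_nonneg)
  have sy0: "sy \<ge> 0" unfolding sy_def by (simp add: sum_nonneg)
  have tH: "4 * t * Hb = (Lb - Hb) / (2 * Lb)" using H0 L0 unfolding t_def by (simp add: field_simps)
  have tL: "4 * t * Lb = (Lb - Hb) / (2 * Hb)" using H0 L0 unfolding t_def by (simp add: field_simps)
  have "4 * t * sy \<le> 4 * t * Hb" using t0 sY unfolding sy_def by simp
  moreover have "(Lb - Hb) / (2 * Lb) < 1" using H0 L0 by (simp add: field_simps)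
  ultimately have ay: "1 - 4 * t * sy > 0" using tH by linarith
  have ax: "1 + 4 * t * sx > 0" using t0 sx0 by (simp add: add_pos_nonneg)
  define IY where "IY = (1 / sqrt (1 - 4 * t * sy)) ^ D"
  define IX where "IX = (1 / sqrt (1 + 4 * t * sx)) ^ D"
  have IY0: "IY > 0" unfolding IY_def using ay by simp
  have IX0: "IX > 0" unfolding IX_def using ax by simp
  have intY: "(\<integral>\<^sup>+\<omega>. ennreal (exp ((2 * t) * Y \<omega>)) \<partial>Pm) = ennreal IY"
  proof -
    have "1 - 2 * (2 * t) * sy > 0" using ay by simp
    from gauss_col[of "2 * t" \<beta> N, where 'd='d] this show ?thesis
      unfolding Pm_def Y_def IY_def D_def sy_def by (simp add: mult.assoc)
  qed
  have intX: "(\<integral>\<^sup>+\<omega>. ennreal (exp ((- 2 * t) * X \<omega>)) \<partial>Pm) = ennreal IX"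
  proof -
    have "1 - 2 * (- 2 * t) * sx > 0" using ax by simp
    from gauss_col[of "- 2 * t" \<alpha> N, where 'd='d] this show ?thesis
      unfolding Pm_def X_def IX_def D_def sx_def by (simp add: mult.assoc)
  qed
  define lam where "lam = sqrt (IX / IY)"
  have lam0: "lam > 0" unfolding lam_def using IX0 IY0 by simp
  have "emeasure Pm {\<omega> \<in> space Pm. X \<omega> < Y \<omega>} = (\<integral>\<^sup>+\<omega>. indicator {\<omega> \<in> space Pm. X \<omega> < Y \<omega>} \<omega> \<partial>Pm)"
    using Fm by simp
  also have "\<dots> \<le> (\<integral>\<^sup>+\<omega>. ennreal (lam / 2) * ennreal (exp ((2 * t) * Y \<omega>))
                        + ennreal (1 / (2 * lam)) * ennreal (exp ((- 2 * t) * X \<omega>)) \<partial>Pm)"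
  proof (intro nn_integral_mono)
    fix \<omega> assume "\<omega> \<in> space Pm"
    show "indicator {\<omega> \<in> space Pm. X \<omega> < Y \<omega>} \<omega> \<le> ennreal (lam / 2) * ennreal (exp ((2 * t) * Y \<omega>))
                        + ennreal (1 / (2 * lam)) * ennreal (exp ((- 2 * t) * X \<omega>))"
    proof (cases "X \<omega> < Y \<omega>")
      case True
      have uv: "exp ((2 * t) * Y \<omega>) * exp ((- 2 * t) * X \<omega>) \<ge> 1"
      proof -
        have "exp ((2 * t) * Y \<omega>) * exp ((- 2 * t) * X \<omega>) = exp (2 * t * (Y \<omega> - X \<omega>))"
          by (simp add: mult_exp_exp algebra_simps)
        moreover have "2 * t * (Y \<omega> - X \<omega>) \<ge> 0" using t0 True by simp
        ultimately show ?thesis by simp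
      qed
      have "1 \<le> lam / 2 * exp ((2 * t) * Y \<omega>) + 1 / (2 * lam) * exp ((- 2 * t) * X \<omega>)"
        by (rule amgm_aux[OF lam0 _ _ uv]) auto
      then have "ennreal 1 \<le> ennreal (lam / 2 * exp ((2 * t) * Y \<omega>) + 1 / (2 * lam) * exp ((- 2 * t) * X \<omega>))"
        by (rule ennreal_leI)
      then show ?thesis using True \<open>\<omega> \<in> space Pm\<close> lam0
        by (simp add: ennreal_plus[symmetric] ennreal_mult[symmetric] del: ennreal_plus)
    next
      case False then show ?thesis by simp
    qed
  qed
  also have "\<dots> = ennreal (lam / 2) * (\<integral>\<^sup>+\<omega>. ennreal (exp ((2 * t) * Y \<omega>)) \<partial>Pm)
                 + ennreal (1 / (2 * lam)) * (\<integral>\<^sup>+\<omega>. ennreal (exp ((- 2 * t) * X \<omega>)) \<partial>Pm)"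
    by (simp add: nn_integral_add nn_integral_cmult)
  also have "\<dots> = ennreal (lam / 2 * IY + 1 / (2 * lam) * IX)"
  proof -
    have "ennreal (lam / 2 * IY + 1 / (2 * lam) * IX) = ennreal (lam / 2 * IY) + ennreal (1 / (2 * lam) * IX)"
      by (rule ennreal_plus) (use lam0 IX0 IY0 in auto)
    also have "ennreal (lam / 2 * IY) = ennreal (lam / 2) * ennreal IY"
      by (rule ennreal_mult) (use lam0 IY0 in auto)
    also have "ennreal (1 / (2 * lam) * IX) = ennreal (1 / (2 * lam)) * ennreal IX"
      by (rule ennreal_mult) (use lam0 IX0 in auto)
    finally show ?thesis unfolding intX intY by (rule sym)
  qed
  also have "lam / 2 * IY + 1 / (2 * lam) * IX = sqrt (IX * IY)"
  proof -
    have "lam * IY = sqrt (IX * IY)" unfolding lam_def using IY0 IX0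
      by (simp add: real_sqrt_divide real_sqrt_mult field_simps;
          metis less_eq_real_def real_sqrt_mult_self mult.commute mult.left_commute)
    moreover have "IX / lam = sqrt (IX * IY)" unfolding lam_def using IY0 IX0
      by (simp add: real_sqrt_divide real_sqrt_mult field_simps;
          metis less_eq_real_def real_sqrt_mult_self mult.commute mult.left_commute)
    ultimately show ?thesis using lam0 by (simp add: field_simps)
  qed
  also have "sqrt (IX * IY) \<le> \<rho> powr (real CARD('d) / 4)"
  proof -
    define Qv where "Qv = (1 - 4 * t * sy) * (1 + 4 * t * sx)"
    have Qv0: "Qv > 0" unfolding Qv_def using ax ay by simp
    have "IX * IY = (1 / sqrt Qv) ^ D" unfolding IX_def IY_def Qv_def
      by (simp add: power_mult_distrib[symmetric] real_sqrt_mult mult.commute)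
    then have s: "sqrt (IX * IY) = (sqrt (1 / sqrt Qv)) ^ D" by (simp add: real_sqrt_power)
    have rho0: "\<rho> > 0"
    proof -
      have "\<rho> * (Lb + Hb)\<^sup>2 > 0" using rho H0 L0 by simp
      moreover have "(Lb + Hb)\<^sup>2 > 0" using H0 L0 by simp
      ultimately show ?thesis by (simp add: zero_less_mult_iff)
    qed
    have "Qv \<ge> (1 - 4 * t * Hb) * (1 + 4 * t * Lb)"
      unfolding Qv_def
    proof (rule mult_mono)
      show "1 - 4 * t * Hb \<le> 1 - 4 * t * sy" using t0 sY unfolding sy_def by simp
      show "1 + 4 * t * Lb \<le> 1 + 4 * t * sx" using t0 sX unfolding sx_def by simp
      show "0 \<le> 1 - 4 * t * sy" using ay by simp
      show "0 \<le> 1 + 4 * t * Lb" using t0 L0 by simp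
    qed
    also have "(1 - 4 * t * Hb) * (1 + 4 * t * Lb) = (Lb + Hb)\<^sup>2 / (4 * Lb * Hb)"
      unfolding tH tL using H0 L0 by (simp add: field_simps power2_eq_square)
    also have "\<dots> = 1 / \<rho>" using rho rho0 H0 L0 by (simp add: field_simps)
    finally have Q: "1 / \<rho> \<le> Qv" .
    have "1 / Qv \<le> \<rho>" using Q rho0 Qv0 by (simp add: field_simps)
    then have "1 / sqrt Qv \<le> sqrt \<rho>" by (metis real_sqrt_le_mono real_sqrt_divide real_sqrt_one)
    then have "sqrt (1 / sqrt Qv) \<le> sqrt (sqrt \<rho>)" by simp
    then have "(sqrt (1 / sqrt Qv)) ^ D \<le> (sqrt (sqrt \<rho>)) ^ D"
      by (intro power_mono) (use Qv0 in auto)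
    also have "\<dots> = \<rho> powr (real CARD('d) / 4)" unfolding D_def using rho0 by (rule sqrt_sqrt_power_powr)
    finally show ?thesis using s by simp
  qed
  finally show "emeasure Pm {\<omega> \<in> space Pm. X \<omega> < Y \<omega>} \<le> ennreal (\<rho> powr (real CARD('d) / 4))"
    by (simp add: ennreal_leI)
qed



definition coef :: "real \<Rightarrow> (nat \<Rightarrow> nat) \<Rightarrow> nat \<Rightarrow> nat set \<Rightarrow> nat \<Rightarrow> real" where
  "coef \<sigma> z i C k = (if k = z i - 1 then 1 else 0) + (if k = i + 1 then \<sigma> else 0)
     - (1 / real (card C)) * (\<Sum>l\<in>C. (if k = z l - 1 then 1 else 0) + (if k = l + 1 then \<sigma> else 0))"

lemma dsum:
  fixes w :: "nat \<Rightarrow> real"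
  assumes "t < N"
  shows "(\<Sum>k<N. (if k = t then a else 0) * w k) = a * w t"
proof -
  have "(\<Sum>k<N. (if k = t then a else 0) * w k) = (\<Sum>k<N. if k = t then a * w k else 0)"
    by (intro sum.cong) auto
  also have "\<dots> = a * w t" using assms by (simp add: sum.delta)
  finally show ?thesis .
qed

lemma sum_rearr:
  fixes A w :: "nat \<Rightarrow> real" and B :: "nat \<Rightarrow> nat \<Rightarrow> real"
  shows "(\<Sum>k\<in>K. (A k - c * (\<Sum>l\<in>C. B l k)) * w k) = (\<Sum>k\<in>K. A k * w k) - c * (\<Sum>l\<in>C. \<Sum>k\<in>K. B l k * w k)"
proof -
  have "(\<Sum>k\<in>K. (A k - c * (\<Sum>l\<in>C. B l k)) * w k) = (\<Sum>k\<in>K. A k * w k) - (\<Sum>k\<in>K. c * (\<Sum>l\<in>C. B l k) * w k)"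
    by (simp add: left_diff_distrib sum_subtractf)
  also have "(\<Sum>k\<in>K. c * (\<Sum>l\<in>C. B l k) * w k) = c * (\<Sum>k\<in>K. \<Sum>l\<in>C. B l k * w k)"
    by (simp add: sum_distrib_left sum_distrib_right mult.assoc)
  also have "(\<Sum>k\<in>K. \<Sum>l\<in>C. B l k * w k) = (\<Sum>l\<in>C. \<Sum>k\<in>K. B l k * w k)"
    by (rule sum.swap)
  finally show ?thesis .
qed

lemma comp_identity:
  fixes \<omega> :: "nat \<times> 'd::finite \<Rightarrow> real"
  assumes C: "finite C" "C \<subseteq> {1..n}" and i: "i \<in> {1..n}" and z: "\<forall>l\<in>{1..n}. z l \<in> {1, 2}"
  shows "(sample \<sigma> z \<omega> i - centroid (sample \<sigma> z \<omega>) C) $ j = (\<Sum>k<n+2. coef \<sigma> z i C k * \<omega> (k, j))"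
proof -
  define w where "w = (\<lambda>k. \<omega> (k, j))"
  have zl: "z l - 1 < n + 2" if "l \<in> {1..n}" for l
  proof -
    have "z l \<in> {1, 2}" using z that by blast
    then show ?thesis by auto
  qed
  have samp: "sample \<sigma> z \<omega> l $ j = w (z l - 1) + \<sigma> * w (l + 1)" for l
    by (simp add: sample_def center_def noise_def w_def)
  have lhs: "(sample \<sigma> z \<omega> i - centroid (sample \<sigma> z \<omega>) C) $ j
      = w (z i - 1) + \<sigma> * w (i + 1) - (1 / real (card C)) * (\<Sum>l\<in>C. w (z l - 1) + \<sigma> * w (l + 1))"
    by (simp add: centroid_def samp sum_component)
  have inner: "(\<Sum>k<n+2. ((if k = z l - 1 then 1 else 0) + (if k = l + 1 then \<sigma> else 0)) * w k)
      = w (z l - 1) + \<sigma> * w (l + 1)" if "l \<in> {1..n}" for l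
  proof -
    have "(\<Sum>k<n+2. ((if k = z l - 1 then 1 else 0) + (if k = l + 1 then \<sigma> else 0)) * w k)
       = (\<Sum>k<n+2. (if k = z l - 1 then 1 else 0) * w k) + (\<Sum>k<n+2. (if k = l + 1 then \<sigma> else 0) * w k)"
      by (simp add: distrib_right sum.distrib)
    also have "\<dots> = w (z l - 1) + \<sigma> * w (l + 1)"
      using zl[OF that] that by (simp add: dsum)
    finally show ?thesis .
  qed
  have "(\<Sum>k<n+2. coef \<sigma> z i C k * w k)
     = (\<Sum>k<n+2. ((if k = z i - 1 then 1 else 0) + (if k = i + 1 then \<sigma> else 0)) * w k)
       - (1 / real (card C)) * (\<Sum>l\<in>C. \<Sum>k<n+2. ((if k = z l - 1 then 1 else 0) + (if k = l + 1 then \<sigma> else 0)) * w k)"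
    unfolding coef_def by (rule sum_rearr)
  also have "\<dots> = w (z i - 1) + \<sigma> * w (i + 1) - (1 / real (card C)) * (\<Sum>l\<in>C. w (z l - 1) + \<sigma> * w (l + 1))"
    using inner i C(2) by (simp add: subset_eq)
  finally show ?thesis using lhs by (simp add: w_def)
qed

lemma norm_sq_vec:
  fixes v :: "real ^ 'd::finite"
  shows "(norm v)\<^sup>2 = (\<Sum>j\<in>UNIV. (v $ j)\<^sup>2)"
  unfolding power2_norm_eq_inner inner_vec_def by (simp add: power2_eq_square)



lemma split_sum_n2:
  fixes f :: "nat \<Rightarrow> real"
  shows "(\<Sum>k<n+2. f k) = f 0 + f 1 + (\<Sum>l\<in>{1..n}. f (l + 1))"
proof -
  have "(\<Sum>k<Suc (Suc n). f k) = f 0 + (\<Sum>k<Suc n. f (Suc k))"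
    by (rule sum.lessThan_Suc_shift)
  also have "(\<Sum>k<Suc n. f (Suc k)) = f 1 + (\<Sum>k<n. f (Suc (Suc k)))"
    by (subst sum.lessThan_Suc_shift) simp
  also have "(\<Sum>k<n. f (Suc (Suc k))) = (\<Sum>l\<in>{1..n}. f (l + 1))"
  proof -
    have "{1..n} = Suc ` {..<n}" by (simp add: image_Suc_lessThan)
    then show ?thesis by (simp add: sum.reindex)
  qed
  finally show ?thesis by (simp add: add.assoc)
qed

lemma coef_noise:
  assumes C: "C \<subseteq> {1..n}" "finite C" and i: "i \<in> {1..n}" and z: "\<forall>l\<in>{1..n}. z l \<in> {1, 2}"
    and l: "l \<in> {1..n}"
  shows "coef \<sigma> z i C (l + 1) = \<sigma> * ((if l = i then 1 else 0) - (if l \<in> C then 1 else 0) / real (card C))"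
proof -
  have zz: "l + 1 \<noteq> z l' - 1" if "l' \<in> {1..n}" for l'
  proof -
    have "z l' \<in> {1, 2}" using z that by blast
    then show ?thesis using l by auto
  qed
  have "(\<Sum>l'\<in>C. (if l + 1 = z l' - 1 then 1 else 0) + (if l + 1 = l' + 1 then \<sigma> else 0))
      = (\<Sum>l'\<in>C. if l' = l then \<sigma> else 0)"
  proof (intro sum.cong refl)
    fix x assume "x \<in> C"
    then have "x \<in> {1..n}" using C(1) by auto
    from zz[OF this] show "(if l + 1 = z x - 1 then 1 else 0) + (if l + 1 = x + 1 then \<sigma> else 0) = (if x = l then \<sigma> else 0)"
      by simp
  qed
  also have "\<dots> = (if l \<in> C then \<sigma> else 0)" using C(2) by (simp add: sum.delta')
  finally have s: "(\<Sum>l'\<in>C. (if l + 1 = z l' - 1 then 1 else 0) + (if l + 1 = l' + 1 then \<sigma> else 0))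
      = (if l \<in> C then \<sigma> else 0)" .
  show ?thesis unfolding coef_def s using zz[OF i] by (auto simp: field_simps)
qed

lemma noise_sq:
  fixes \<sigma> :: real and n i :: nat
  assumes C: "C \<subseteq> {1..n}" "card C > 0" and i: "i \<in> {1..n}"
  shows "(\<Sum>l\<in>{1..n}. (\<sigma> * ((if l = i then 1 else 0) - (if l \<in> C then 1 else 0) / real (card C)))\<^sup>2)
     = \<sigma>\<^sup>2 * (if i \<in> C then 1 - 1 / real (card C) else 1 + 1 / real (card C))"
proof -
  define c where "c = real (card C)"
  have c0: "c > 0" using C unfolding c_def by simp
  have fin: "finite C" using C(2) card_gt_0_iff by blast
  define h where "h = (\<lambda>l. (\<sigma> * ((if l = i then 1 else 0) - (if l \<in> C then 1 else 0) / c))\<^sup>2)"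
  have "(\<Sum>l\<in>{1..n}. h l) = h i + (\<Sum>l\<in>{1..n} - {i}. h l)"
    by (rule sum.remove) (use i in auto)
  also have "(\<Sum>l\<in>{1..n} - {i}. h l) = (\<Sum>l\<in>{1..n} - {i}. if l \<in> C - {i} then \<sigma>\<^sup>2 / c\<^sup>2 else 0)"
    by (intro sum.cong) (auto simp: h_def power_divide power_mult_distrib)
  also have "\<dots> = \<sigma>\<^sup>2 / c\<^sup>2 * real (card (C - {i}))"
  proof -
    have "C - {i} \<subseteq> {1..n} - {i}" using C by auto
    then have "(\<Sum>l\<in>{1..n} - {i}. if l \<in> C - {i} then \<sigma>\<^sup>2 / c\<^sup>2 else 0) = (\<Sum>l\<in>C - {i}. \<sigma>\<^sup>2 / c\<^sup>2)"
      by (intro sum.mono_neutral_cong_right) auto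
    then show ?thesis by simp
  qed
  finally have S: "(\<Sum>l\<in>{1..n}. h l) = h i + \<sigma>\<^sup>2 / c\<^sup>2 * real (card (C - {i}))" .
  show ?thesis
  proof (cases "i \<in> C")
    case True
    have "0 < card C" using fin True card_gt_0_iff[of C] by auto
    then have cc: "real (card (C - {i})) = c - 1" using True fin unfolding c_def by (simp add: of_nat_diff Suc_le_eq)
    have hi: "h i = \<sigma>\<^sup>2 * (1 - 1 / c)\<^sup>2" using True by (simp add: h_def power_mult_distrib)
    have "(\<Sum>l\<in>{1..n}. h l) = \<sigma>\<^sup>2 * (1 - 1 / c)" unfolding S cc hi using c0
      by (simp add: field_simps power2_eq_square)
    then show ?thesis using True unfolding h_def c_def by simp
  next
    case False
    have cc: "real (card (C - {i})) = c" using False unfolding c_def by simp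
    have hi: "h i = \<sigma>\<^sup>2" using False by (simp add: h_def)
    have "(\<Sum>l\<in>{1..n}. h l) = \<sigma>\<^sup>2 * (1 + 1 / c)" unfolding S cc hi using c0
      by (simp add: field_simps power2_eq_square)
    then show ?thesis using False unfolding h_def c_def by simp
  qed
qed

lemma coef_center:
  assumes C: "C \<subseteq> {1..n}" "card C > 0" and i: "i \<in> C" and z: "\<forall>l\<in>{1..n}. z l \<in> {1, 2}"
  shows "coef \<sigma> z i C 1 = - coef \<sigma> z i C 0" and "\<bar>coef \<sigma> z i C 0\<bar> \<le> (real (card C) - 1) / real (card C)"
proof -
  define c where "c = real (card C)"
  have c0: "c > 0" using C unfolding c_def by simp
  have fin: "finite C" using C(2) card_gt_0_iff by blast
  define e where "e = (\<lambda>l. if z l = 1 then 1 else (0::real))"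
  have zC: "z l \<in> {1, 2}" if "l \<in> C" for l using z C that by blast
  have c0e: "coef \<sigma> z i C 0 = e i - (1 / c) * (\<Sum>l\<in>C. e l)"
  proof -
    have "(\<Sum>l\<in>C. (if 0 = z l - 1 then 1 else 0) + (if (0::nat) = l + 1 then \<sigma> else 0)) = (\<Sum>l\<in>C. e l)"
    proof (intro sum.cong refl)
      fix x assume "x \<in> C"
      then have "z x = 1 \<or> z x = 2" using zC by blast
      then show "(if 0 = z x - 1 then 1 else 0) + (if (0::nat) = x + 1 then \<sigma> else 0) = e x"
        by (auto simp: e_def)
    qed
    moreover have "(if 0 = z i - 1 then 1 else 0) = e i" using zC[OF i] by (auto simp: e_def)
    ultimately show ?thesis unfolding coef_def c_def by simp
  qed
  have c1e: "coef \<sigma> z i C 1 = (1 - e i) - (1 / c) * (\<Sum>l\<in>C. 1 - e l)"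
  proof -
    have "(\<Sum>l\<in>C. (if 1 = z l - 1 then 1 else 0) + (if (1::nat) = l + 1 then \<sigma> else 0)) = (\<Sum>l\<in>C. 1 - e l)"
    proof (intro sum.cong refl)
      fix x assume x: "x \<in> C"
      then have "z x = 1 \<or> z x = 2" using zC by blast
      moreover have "x \<ge> 1" using x C(1) by auto
      ultimately show "(if 1 = z x - 1 then 1 else 0) + (if (1::nat) = x + 1 then \<sigma> else 0) = 1 - e x"
        by (auto simp: e_def)
    qed
    moreover have "(if 1 = z i - 1 then 1 else 0) = 1 - e i" using zC[OF i] by (auto simp: e_def)
    moreover have "(if (1::nat) = i + 1 then \<sigma> else 0) = 0" using i C(1) by auto
    ultimately show ?thesis unfolding coef_def c_def by simp
  qed
  have s1: "(\<Sum>l\<in>C. 1 - e l) = c - (\<Sum>l\<in>C. e l)" unfolding c_def by (simp add: sum_subtractf)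
  show "coef \<sigma> z i C 1 = - coef \<sigma> z i C 0" unfolding c1e c0e s1 using c0
    by (simp add: field_simps)
  have "coef \<sigma> z i C 0 = (1 / c) * (\<Sum>l\<in>C. e i - e l)"
    unfolding c0e using c0 by (simp add: sum_subtractf c_def field_simps)
  also have "(\<Sum>l\<in>C. e i - e l) = (\<Sum>l\<in>C - {i}. e i - e l)"
    using i fin by (simp add: sum.remove)
  finally have eq: "coef \<sigma> z i C 0 = (1 / c) * (\<Sum>l\<in>C - {i}. e i - e l)" .
  have "\<bar>\<Sum>l\<in>C - {i}. e i - e l\<bar> \<le> (\<Sum>l\<in>C - {i}. \<bar>e i - e l\<bar>)" by (rule sum_abs)
  also have "\<dots> \<le> (\<Sum>l\<in>C - {i}. 1)" by (intro sum_mono) (auto simp: e_def)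
  also have "\<dots> = c - 1" using i fin C(2) unfolding c_def by (simp add: of_nat_diff Suc_le_eq)
  finally have "\<bar>\<Sum>l\<in>C - {i}. e i - e l\<bar> \<le> c - 1" .
  then show "\<bar>coef \<sigma> z i C 0\<bar> \<le> (real (card C) - 1) / real (card C)"
    unfolding eq c_def[symmetric] using c0 by (simp add: abs_mult divide_right_mono)
qed



lemma bal_sym: "approx_balanced n q C1 C2 \<Longrightarrow> approx_balanced n q C2 C1"
  unfolding approx_balanced_def by (auto simp: insert_commute)

lemma bal_facts:
  assumes "approx_balanced n q C1 C2"
  shows "C1 \<subseteq> {1..n}" "C2 = {1..n} - C1" "finite C1" "finite C2" "card C1 > 2" "card C2 > 2"
    "real (card C1) < (sqrt n * q + n) / 2" "real (card C2) < (sqrt n * q + n) / 2"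
proof -
  have s: "sqrt (real n / 4) = sqrt n / 2" by (simp add: real_sqrt_divide)
  from assms show "C1 \<subseteq> {1..n}" "C2 = {1..n} - C1" unfolding approx_balanced_def by auto
  then show "finite C1" "finite C2" by (auto intro: finite_subset)
  from assms show "card C1 > 2" "card C2 > 2" unfolding approx_balanced_def by auto
  from assms have "real (card C1) < real n / 2 + q * sqrt (real n / 4)" "real (card C2) < real n / 2 + q * sqrt (real n / 4)"
    unfolding approx_balanced_def by auto
  then show "real (card C1) < (sqrt n * q + n) / 2" "real (card C2) < (sqrt n * q + n) / 2"
    unfolding s by (simp_all add: field_simps)
qed

lemma dist_identity:
  fixes \<omega> :: "nat \<times> 'd::finite \<Rightarrow> real"
  assumes "finite C" "C \<subseteq> {1..n}" "i \<in> {1..n}" "\<forall>l\<in>{1..n}. z l \<in> {1, 2}"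
  shows "(norm (sample \<sigma> z \<omega> i - centroid (sample \<sigma> z \<omega>) C))\<^sup>2
       = (\<Sum>j\<in>UNIV. (\<Sum>k<n+2. coef \<sigma> z i C k * \<omega> (k, j))\<^sup>2)"
proof -
  have "\<And>j. (sample \<sigma> z \<omega> i - centroid (sample \<sigma> z \<omega>) C) $ j = (\<Sum>k<n+2. coef \<sigma> z i C k * \<omega> (k, j))"
    by (rule comp_identity[OF assms])
  then show ?thesis unfolding norm_sq_vec by (simp only:)
qed

lemma noise_part:
  assumes C: "C \<subseteq> {1..n}" "card C > 0" and i: "i \<in> {1..n}" and z: "\<forall>l\<in>{1..n}. z l \<in> {1, 2}"
  shows "(\<Sum>k<n+2. (coef \<sigma> z i C k)\<^sup>2) = (coef \<sigma> z i C 0)\<^sup>2 + (coef \<sigma> z i C 1)\<^sup>2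
           + \<sigma>\<^sup>2 * (if i \<in> C then 1 - 1 / real (card C) else 1 + 1 / real (card C))"
proof -
  have fin: "finite C" using C(2) card_gt_0_iff by blast
  have "(\<Sum>l\<in>{1..n}. (coef \<sigma> z i C (l + 1))\<^sup>2)
      = (\<Sum>l\<in>{1..n}. (\<sigma> * ((if l = i then 1 else 0) - (if l \<in> C then 1 else 0) / real (card C)))\<^sup>2)"
    using coef_noise[OF C(1) fin i z] by (intro sum.cong) auto
  also have "\<dots> = \<sigma>\<^sup>2 * (if i \<in> C then 1 - 1 / real (card C) else 1 + 1 / real (card C))"
    by (rule noise_sq[OF C i])
  finally have calc: "(\<Sum>l\<in>{1..n}. (coef \<sigma> z i C (l + 1))\<^sup>2) = \<sigma>\<^sup>2 * (if i \<in> C then 1 - 1 / real (card C) else 1 + 1 / real (card C))" .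
  have sp: "(\<Sum>k<n+2. (coef \<sigma> z i C k)\<^sup>2) = (coef \<sigma> z i C 0)\<^sup>2 + (coef \<sigma> z i C 1)\<^sup>2 + (\<Sum>l\<in>{1..n}. (coef \<sigma> z i C (l + 1))\<^sup>2)"
    by (rule split_sum_n2)
  show ?thesis unfolding sp calc by (rule refl)
qed

lemma sX_bound:
  assumes C: "C \<subseteq> {1..n}" "card C > 0" and i: "i \<in> {1..n}" "i \<notin> C" and z: "\<forall>l\<in>{1..n}. z l \<in> {1, 2}"
  shows "\<sigma>\<^sup>2 * (1 + 1 / real (card C)) \<le> (\<Sum>k<n+2. (coef \<sigma> z i C k)\<^sup>2)"
  using noise_part[OF C i(1) z, of \<sigma>] i(2) by simp

lemma sY_bound:
  assumes C: "C \<subseteq> {1..n}" "card C > 0" and i: "i \<in> C" and z: "\<forall>l\<in>{1..n}. z l \<in> {1, 2}"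
  shows "(\<Sum>k<n+2. (coef \<sigma> z i C k)\<^sup>2) \<le> 2 * ((real (card C) - 1) / real (card C))\<^sup>2 + \<sigma>\<^sup>2 * (1 - 1 / real (card C))"
proof -
  have i': "i \<in> {1..n}" using i C by auto
  have e1: "coef \<sigma> z i C 1 = - coef \<sigma> z i C 0" and b: "\<bar>coef \<sigma> z i C 0\<bar> \<le> (real (card C) - 1) / real (card C)"
    using coef_center[OF C i z] by auto
  have "(coef \<sigma> z i C 0)\<^sup>2 \<le> ((real (card C) - 1) / real (card C))\<^sup>2"
    using b by (metis abs_ge_zero power2_abs power_mono)
  then show ?thesis using noise_part[OF C i' z, of \<sigma>] i e1 by simp
qed



theorem corollary3p8:
  fixes n :: nat and q \<beta> \<sigma> :: real and z :: "nat \<Rightarrow> nat"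
  assumes "n \<ge> 2"
    and "\<forall>i\<in>{1..n}. z i \<in> {1, 2}"
    and "\<exists>i\<in>{1..n}. z i = 1" and "\<exists>i\<in>{1..n}. z i = 2"
    and "q > 1" and "\<beta> > 1"
    and "\<sigma> = \<beta> * (sqrt n * q + n - 2) / (sqrt 2 * sqrt (sqrt n * q + n))"
  defines "\<rho> \<equiv> \<sigma>\<^sup>2 * (sqrt n * q + n - 2) * (sqrt n * q + n) * (sqrt n * q + n + 2)
                * (sqrt n * (\<sigma>\<^sup>2 + 2) * (sqrt n + q) - 4)
              / (n * \<sigma>\<^sup>2 * (sqrt n + q)\<^sup>2 + (sqrt n * q + n - 2)\<^sup>2)\<^sup>2"
  defines "E \<equiv> {\<omega> \<in> space (gauss_space n :: (nat \<times> 'd::finite \<Rightarrow> real) measure).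
                  \<exists>C1 C2. approx_balanced n q C1 C2 \<and>
                    \<not> lloyd_fixed_point (sample \<sigma> z \<omega>) C1 C2}"
  shows "E \<in> sets (gauss_space n) \<and>
         measure (gauss_space n) E \<le> 2 ^ n * real n * \<rho> powr (real CARD('d) / 4)"
proof -
  note zdom = assms(2)
  have rho_def: "\<rho> = \<sigma>\<^sup>2 * (sqrt n * q + n - 2) * (sqrt n * q + n) * (sqrt n * q + n + 2)
                * (sqrt n * (\<sigma>\<^sup>2 + 2) * (sqrt n + q) - 4)
              / (n * \<sigma>\<^sup>2 * (sqrt n + q)\<^sup>2 + (sqrt n * q + n - 2)\<^sup>2)\<^sup>2" using assms(8) by simp
  have E_def: "E = {\<omega> \<in> space (gauss_space n :: (nat \<times> 'd::finite \<Rightarrow> real) measure).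
                  \<exists>C1 C2. approx_balanced n q C1 C2 \<and>
                    \<not> lloyd_fixed_point (sample \<sigma> z \<omega>) C1 C2}" using assms(9) by simp
  have Pm_eq: "(gauss_space n :: (nat \<times> 'd \<Rightarrow> real) measure) = PiM ({..<n+2} \<times> UNIV) (\<lambda>_. M0)"
    by (simp add: gauss_space_def)
  interpret P: prob_space "gauss_space n :: (nat \<times> 'd \<Rightarrow> real) measure"
    unfolding gauss_space_def by (rule prob_space_PiM) (rule prob_space_normal_density, simp)
  define m where "m = sqrt n * q + n"
  have sqn: "sqrt n > 0" using assms(1) by simp
  have mn: "m > real n" using sqn assms(5) unfolding m_def by simp
  have m2: "m > 2" using mn assms(1) by linarith
  have sigma_eq: "\<sigma> = \<beta> * (m - 2) / (sqrt 2 * sqrt m)" using assms(7) unfolding m_def by simp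
  have sig2: "\<sigma>\<^sup>2 = \<beta>\<^sup>2 * (m - 2)\<^sup>2 / (2 * m)"
    using m2 unfolding sigma_eq by (simp add: power_divide power_mult_distrib)
  define Ls where "Ls = \<sigma>\<^sup>2 * (1 + 2 / m)"
  define Hs where "Hs = \<sigma>\<^sup>2 * (1 - 2 / m) + 2 * (1 - 2 / m)\<^sup>2"
  have sig0: "\<sigma>\<^sup>2 > 0" using sig2 m2 assms(6) by simp
  have one_m: "1 - 2 / m > 0" using m2 by simp
  have Hs0: "Hs > 0" unfolding Hs_def using sig0 one_m by (simp add: add_pos_nonneg)
  have HL: "Hs < Ls"
  proof -
    have "Ls - Hs = (4 * (\<sigma>\<^sup>2 * m) - 2 * (m - 2)\<^sup>2) / m\<^sup>2"
      unfolding Ls_def Hs_def using m2 by (simp add: field_simps power2_eq_square)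
    also have "4 * (\<sigma>\<^sup>2 * m) = 2 * \<beta>\<^sup>2 * (m - 2)\<^sup>2" using m2 unfolding sig2 by (simp add: field_simps)
    finally have "Ls - Hs = 2 * (\<beta>\<^sup>2 - 1) * (m - 2)\<^sup>2 / m\<^sup>2" by (simp add: algebra_simps)
    moreover have "\<beta>\<^sup>2 > 1" using assms(6) by (simp add: one_less_power)
    ultimately have "Ls - Hs > 0" using m2 by simp
    then show ?thesis by simp
  qed
  have rho_id: "\<rho> * (Ls + Hs)\<^sup>2 = 4 * Ls * Hs"
  proof -
    define s where "s = \<sigma>\<^sup>2"
    have sq2: "sqrt (real n) * (sqrt (real n) * x) = real n * x" for x
      by (simp add: mult.assoc[symmetric])
    have e1: "sqrt n * (\<sigma>\<^sup>2 + 2) * (sqrt n + q) = (s + 2) * m"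
      unfolding m_def s_def by (simp add: algebra_simps sq2)
    have e2: "n * \<sigma>\<^sup>2 * (sqrt n + q)\<^sup>2 = s * m\<^sup>2"
      unfolding m_def s_def by (simp add: algebra_simps power2_eq_square sq2)
    define Dn where "Dn = s * m\<^sup>2 + (m - 2)\<^sup>2"
    have r: "\<rho> = s * (m - 2) * m * (m + 2) * ((s + 2) * m - 4) / Dn\<^sup>2"
      unfolding rho_def e1 e2 unfolding m_def s_def Dn_def by simp
    have s0: "s > 0" using sig0 by (simp add: s_def)
    have Dn0: "Dn > 0" unfolding Dn_def using s0 m2 by (simp add: add_pos_nonneg)
    have LH: "Ls + Hs = 2 * Dn / m\<^sup>2"
      unfolding Ls_def Hs_def s_def[symmetric] Dn_def using m2 by (simp add: field_simps power2_eq_square)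
    define A where "A = s * (m - 2) * m * (m + 2) * ((s + 2) * m - 4)"
    have "\<rho> * (Ls + Hs)\<^sup>2 = A / Dn\<^sup>2 * (2 * Dn / m\<^sup>2)\<^sup>2" unfolding r LH A_def by simp
    also have "\<dots> = 4 * A / m\<^sup>2 / m\<^sup>2"
      using Dn0 m2 by (simp add: power_divide power_mult_distrib)
    also have "\<dots> = 4 * s * (m - 2) * (m + 2) * ((s + 2) * m - 4) / m ^ 3"
      unfolding A_def using m2 by (simp add: field_simps power2_eq_square power3_eq_cube)
    also have "\<dots> = 4 * Ls * Hs"
      unfolding Ls_def Hs_def s_def[symmetric] using m2 by (simp add: field_simps power2_eq_square power3_eq_cube)
    finally show ?thesis .
  qed
  define D where "D = real CARD('d)"
  define cX where "cX = (\<lambda>C1 i. coef \<sigma> z i ({1..n} - C1))"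
  define cY where "cY = (\<lambda>C1 i. coef \<sigma> z i C1)"
  define Xf where "Xf = (\<lambda>C1 i (\<omega>::nat \<times> 'd \<Rightarrow> real). \<Sum>j\<in>UNIV. (\<Sum>k<n+2. cX C1 i k * \<omega> (k, j))\<^sup>2)"
  define Yf where "Yf = (\<lambda>C1 i (\<omega>::nat \<times> 'd \<Rightarrow> real). \<Sum>j\<in>UNIV. (\<Sum>k<n+2. cY C1 i k * \<omega> (k, j))\<^sup>2)"
  define G where "G = (\<lambda>C1 i. {\<omega> \<in> space (gauss_space n :: (nat \<times> 'd \<Rightarrow> real) measure).
        approx_balanced n q C1 ({1..n} - C1) \<and> i \<in> C1 \<and> Xf C1 i \<omega> < Yf C1 i \<omega>})"
  have Gset: "G C1 i \<in> sets (gauss_space n)" for C1 i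
  proof -
    have [measurable]: "Xf C1 i \<in> borel_measurable (gauss_space n)" "Yf C1 i \<in> borel_measurable (gauss_space n)"
      unfolding Xf_def Yf_def Pm_eq by (rule lin_meas)+
    show ?thesis unfolding G_def by measurable
  qed
  have Gbound: "measure (gauss_space n) (G C1 i) \<le> \<rho> powr (D / 4)" for C1 i
  proof (cases "approx_balanced n q C1 ({1..n} - C1) \<and> i \<in> C1")
    case False
    then have "G C1 i = {}" unfolding G_def by auto
    then show ?thesis by simp
  next
    case True
    then have bal: "approx_balanced n q C1 ({1..n} - C1)" and iC: "i \<in> C1" by auto
    note bf = bal_facts[OF bal]
    define C2 where "C2 = {1..n} - C1"
    have i1: "i \<in> {1..n}" using iC bf(1) by auto
    have iC2: "i \<notin> C2" using iC by (simp add: C2_def)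
    have C2s: "C2 \<subseteq> {1..n}" by (auto simp: C2_def)
    define a where "a = real (card C1)"
    define b where "b = real (card C2)"
    have a3: "a > 2" and b3: "b > 2" using bf(5,6) unfolding a_def b_def C2_def by auto
    have am: "a < m / 2" and bm: "b < m / 2" using bf(7,8) unfolding a_def b_def C2_def m_def by auto
    have cC1: "card C1 > 0" and cC2: "card C2 > 0" using bf(5,6) unfolding C2_def by auto
    have inv_b: "2 / m \<le> 1 / b" using bm b3 m2 by (simp add: field_simps)
    have inv_a: "2 / m \<le> 1 / a" using am a3 m2 by (simp add: field_simps)
    have sX: "Ls \<le> (\<Sum>k<n+2. (cX C1 i k)\<^sup>2)"
    proof -
      have "Ls \<le> \<sigma>\<^sup>2 * (1 + 1 / b)" unfolding Ls_def using inv_b sig0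
        by (intro mult_left_mono) auto
      also have "\<dots> \<le> (\<Sum>k<n+2. (cX C1 i k)\<^sup>2)"
        using sX_bound[OF C2s cC2 i1 iC2 zdom, of \<sigma>] unfolding cX_def b_def C2_def by simp
      finally show ?thesis .
    qed
    have sY: "(\<Sum>k<n+2. (cY C1 i k)\<^sup>2) \<le> Hs"
    proof -
      have "(\<Sum>k<n+2. (cY C1 i k)\<^sup>2) \<le> 2 * ((a - 1) / a)\<^sup>2 + \<sigma>\<^sup>2 * (1 - 1 / a)"
        using sY_bound[OF bf(1) cC1 iC zdom, of \<sigma>] unfolding cY_def a_def by simp
      also have "\<dots> \<le> Hs"
      proof -
        have q1: "(a - 1) / a = 1 - 1 / a" using a3 by (simp add: field_simps)
        have q2: "0 \<le> 1 - 1 / a" using a3 by simp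
        have q3: "1 - 1 / a \<le> 1 - 2 / m" using inv_a by simp
        have "((a - 1) / a)\<^sup>2 \<le> (1 - 2 / m)\<^sup>2" unfolding q1 using power_mono[OF q3 q2, of 2] by simp
        moreover have "\<sigma>\<^sup>2 * (1 - 1 / a) \<le> \<sigma>\<^sup>2 * (1 - 2 / m)" using q3 sig0 by (intro mult_left_mono) auto
        ultimately show ?thesis unfolding Hs_def by simp
      qed
      finally show ?thesis .
    qed
    have Geq: "G C1 i = {\<omega> \<in> space (PiM ({..<n+2} \<times> (UNIV::'d set)) (\<lambda>_. M0)).
        (\<Sum>j\<in>(UNIV::'d set). (\<Sum>k<n+2. cX C1 i k * \<omega> (k, j))\<^sup>2) < (\<Sum>j\<in>(UNIV::'d set). (\<Sum>k<n+2. cY C1 i k * \<omega> (k, j))\<^sup>2)}"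
      unfolding G_def Xf_def Yf_def Pm_eq using True by auto
    have "emeasure (gauss_space n) (G C1 i) \<le> ennreal (\<rho> powr (real CARD('d) / 4))"
      unfolding Geq Pm_eq
      by (rule chernoff_pair(2)[OF sX sY Hs0 HL rho_id])
    then have "ennreal (measure (gauss_space n) (G C1 i)) \<le> ennreal (\<rho> powr (D / 4))"
      by (simp add: P.emeasure_eq_measure D_def)
    then show ?thesis by (subst (asm) ennreal_le_iff) auto
  qed
  have ident: "(norm (sample \<sigma> z \<omega> i - centroid (sample \<sigma> z \<omega>) C))\<^sup>2
       = (\<Sum>j\<in>UNIV. (\<Sum>k<n+2. coef \<sigma> z i C k * \<omega> (k, j))\<^sup>2)"
    if "C \<subseteq> {1..n}" "i \<in> {1..n}" for C i and \<omega> :: "nat \<times> 'd \<Rightarrow> real"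
    using dist_identity[OF finite_subset[OF that(1)] that(1) that(2) zdom] by simp
  have E_eq: "E = (\<Union>C1\<in>Pow {1..n}. \<Union>i\<in>{1..n}. G C1 i)"
  proof
    show "E \<subseteq> (\<Union>C1\<in>Pow {1..n}. \<Union>i\<in>{1..n}. G C1 i)"
    proof
      fix \<omega> assume "\<omega> \<in> E"
      then have sp: "\<omega> \<in> space (gauss_space n)" and
        "\<exists>C1 C2. approx_balanced n q C1 C2 \<and> \<not> lloyd_fixed_point (sample \<sigma> z \<omega>) C1 C2"
        unfolding E_def by auto
      then obtain C1 C2 where bal: "approx_balanced n q C1 C2" and nl: "\<not> lloyd_fixed_point (sample \<sigma> z \<omega>) C1 C2"
        by blast
      note bf = bal_facts[OF bal]
      have C2s: "C2 \<subseteq> {1..n}" using bf(2) by auto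
      have C1c: "{1..n} - C2 = C1" using bf(1,2) by auto
      let ?x = "sample \<sigma> z \<omega>"
      from nl consider
        (a) i where "i \<in> C1" "(norm (?x i - centroid ?x C2))\<^sup>2 < (norm (?x i - centroid ?x C1))\<^sup>2"
        | (b) i where "i \<in> C2" "(norm (?x i - centroid ?x C1))\<^sup>2 < (norm (?x i - centroid ?x C2))\<^sup>2"
        unfolding lloyd_fixed_point_def by blast
      then show "\<omega> \<in> (\<Union>C1\<in>Pow {1..n}. \<Union>i\<in>{1..n}. G C1 i)"
      proof cases
        case (a i)
        have i1: "i \<in> {1..n}" using a(1) bf(1) by auto
        have X: "Xf C1 i \<omega> = (norm (?x i - centroid ?x C2))\<^sup>2"
          by (simp only: Xf_def cX_def bf(2)[symmetric] ident[OF C2s i1, symmetric])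
        have Y: "Yf C1 i \<omega> = (norm (?x i - centroid ?x C1))\<^sup>2"
          by (simp only: Yf_def cY_def ident[OF bf(1) i1, symmetric])
        have lt: "Xf C1 i \<omega> < Yf C1 i \<omega>" unfolding X Y by (rule a(2))
        have bal': "approx_balanced n q C1 ({1..n} - C1)" using bal bf(2) by simp
        have w: "\<omega> \<in> G C1 i" unfolding G_def using sp bal' a(1) lt by blast
        have "C1 \<in> Pow {1..n}" using bf(1) by simp
        then show ?thesis using i1 w by blast
      next
        case (b i)
        have i1: "i \<in> {1..n}" using b(1) C2s by auto
        have bal2: "approx_balanced n q C2 ({1..n} - C2)" unfolding C1c by (rule bal_sym[OF bal])
        have X: "Xf C2 i \<omega> = (norm (?x i - centroid ?x C1))\<^sup>2"
          by (simp only: Xf_def cX_def C1c ident[OF bf(1) i1, symmetric])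
        have Y: "Yf C2 i \<omega> = (norm (?x i - centroid ?x C2))\<^sup>2"
          by (simp only: Yf_def cY_def ident[OF C2s i1, symmetric])
        have lt: "Xf C2 i \<omega> < Yf C2 i \<omega>" unfolding X Y by (rule b(2))
        have w: "\<omega> \<in> G C2 i" unfolding G_def using sp bal2 b(1) lt by blast
        have "C2 \<in> Pow {1..n}" using C2s by simp
        then show ?thesis using i1 w by blast
      qed
    qed
  next
    show "(\<Union>C1\<in>Pow {1..n}. \<Union>i\<in>{1..n}. G C1 i) \<subseteq> E"
    proof
      fix \<omega> assume "\<omega> \<in> (\<Union>C1\<in>Pow {1..n}. \<Union>i\<in>{1..n}. G C1 i)"
      then obtain C1 i where C1: "C1 \<subseteq> {1..n}" and i1: "i \<in> {1..n}" and w: "\<omega> \<in> G C1 i" by auto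
      from w have sp: "\<omega> \<in> space (gauss_space n)" and bal: "approx_balanced n q C1 ({1..n} - C1)"
        and iC: "i \<in> C1" and lt: "Xf C1 i \<omega> < Yf C1 i \<omega>" unfolding G_def by auto
      let ?x = "sample \<sigma> z \<omega>"
      have C2s: "{1..n} - C1 \<subseteq> {1..n}" by auto
      have X: "Xf C1 i \<omega> = (norm (?x i - centroid ?x ({1..n} - C1)))\<^sup>2"
        by (simp only: Xf_def cX_def ident[OF C2s i1, symmetric])
      have Y: "Yf C1 i \<omega> = (norm (?x i - centroid ?x C1))\<^sup>2"
        by (simp only: Yf_def cY_def ident[OF C1 i1, symmetric])
      have "(norm (?x i - centroid ?x ({1..n} - C1)))\<^sup>2 < (norm (?x i - centroid ?x C1))\<^sup>2"
        using lt unfolding X Y .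
      then have "\<not> lloyd_fixed_point ?x C1 ({1..n} - C1)"
        unfolding lloyd_fixed_point_def using iC by blast
      then show "\<omega> \<in> E" unfolding E_def using sp bal by blast
    qed
  qed
  have inner_sets: "(\<Union>i\<in>{1..n}. G C1 i) \<in> sets (gauss_space n)" for C1
    by (rule sets.finite_UN) (auto intro: Gset)
  show ?thesis
  proof
    show "E \<in> sets (gauss_space n)" unfolding E_eq using inner_sets by blast
    have "measure (gauss_space n) E \<le> (\<Sum>C1\<in>Pow {1..n}. measure (gauss_space n) (\<Union>i\<in>{1..n}. G C1 i))"
      unfolding E_eq
    proof (rule measure_UNION_le)
      show "finite (Pow {1..n})" by simp
      fix C1 show "(\<Union>i\<in>{1..n}. G C1 i) \<in> sets (gauss_space n)" by (rule inner_sets)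
    qed
    also have "\<dots> \<le> (\<Sum>C1\<in>Pow {1..n}. \<Sum>i\<in>{1..n}. measure (gauss_space n) (G C1 i))"
    proof (intro sum_mono measure_UNION_le)
      show "finite {1..n}" by simp
      fix C1 i show "G C1 i \<in> sets (gauss_space n)" by (rule Gset)
    qed
    also have "\<dots> \<le> (\<Sum>C1\<in>Pow {1..n}. \<Sum>i\<in>{1..n}. \<rho> powr (D / 4))"
      by (intro sum_mono Gbound)
    also have "\<dots> = 2 ^ n * real n * \<rho> powr (real CARD('d) / 4)"
      by (simp add: card_Pow D_def)
    finally show "measure (gauss_space n) E \<le> 2 ^ n * real n * \<rho> powr (real CARD('d) / 4)" .
  qed
qed


end
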